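(* Let $l_c>0$ and $r_c\in(0,\tfrac1{10})$, and let $(\mathbb C,g_{\mathsf{cb}})$ be the corresponding cb-surface, with parameters $s_0,s_e,s_2,s_b$. Then: (i) $\mathrm K_{g_{\mathsf{cb}}}\in[-1,\tfrac12]$ almost everywhere; (ii) $s_0=-r_c^{-1}\bigl(l_c+\arctan r_c^{-1}\bigr)$ and $s_e=s_0+\tfrac12\log(1+r_c^2)$; in particular $\mathbb D_{\sqrt{1+r_c^2}}=\mathcal U_i\cup\overline{\mathcal U_c}\cup\mathcal U_b$; (iii) $s_b\le \tfrac74 r_c^{-1}$; (iv) $\mathrm{Vol}_{g_{\mathsf{cb}}}\mathcal U_b<10\pi$.
   Context: $\mathbb D_r=\{z\in\mathbb C:|z|<r\}$. For $l_c>0$ and $r_c\in(0,1)$ the cb-surface is the rotationally symmetric plane $(\mathbb C,g_{\mathsf{cb}})$ defined as follows. Using logarithmic cylindrical coordinates $z=e^{-s+s_e+i\theta}$, $(s,\theta)\in\mathbb R\times[0,2\pi)$, on $\mathbb C\setminus\{0\}$ (so $s\to\infty$ corresponds to $z\to0$), set $g_{\mathsf{cb}}=e^{2u_{\mathsf{cb}}(s)}(ds^2+d\theta^2)$ where $u_{\mathsf{cb}}(s)=-s+s_e$ for $s\in(-\infty,s_0]$; $u_{\mathsf{cb}}(s)=-\log\bigl(r_c^{-1}\cos(r_cs+l_c)\bigr)$ for $s\in(s_0,-l_c/r_c)$; $u_{\mathsf{cb}}(s)=\log r_c$ for $s\in[-l_c/r_c,0]$; $u_{\mathsf{cb}}(s)=-\log\bigl(r_c^{-1}\cos(r_cs)\bigr)$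 for $s\in(0,s_2]$; $u_{\mathsf{cb}}(s)=-\log\cosh(s-s_b)+\tfrac12\log 2$ for $s\in(s_2,\infty)$; with parameters $s_0\in\bigl(-\frac{l_c+\pi/2}{r_c},-\frac{l_c}{r_c}\bigr)$, $s_e\in(s_0,-\frac{l_c}{r_c})$, $s_2\in(0,\frac{\pi}{2r_c})$ and $s_b>s_2$ chosen uniquely such that $u_{\mathsf{cb}}\in C^1(\mathbb R)$. The regions are: $\mathcal U_e$ the set with $s\in(-\infty,s_0)$, $\mathcal U_i$ the set with $s\in(s_0,-l_c/r_c)$, $\mathcal U_c$ the set with $s\in(-l_c/r_c,0)$, and $\mathcal U_b$ the set with $s\in(0,\infty)$ together with the origin $z=0$. *)

theory Defs
  imports "HOL-Analysis.Analysis"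
begin

text \<open>Conformal factor of the cb-surface in the cylindrical coordinate s.\<close>
definition u_cb :: "real \<Rightarrow> real \<Rightarrow> real \<Rightarrow> real \<Rightarrow> real \<Rightarrow> real \<Rightarrow> real \<Rightarrow> real" where
  "u_cb lc rc s0 se s2 sb s =
    (if s \<le> s0 then - s + se
     else if s < - lc / rc then - ln (inverse rc * cos (rc * s + lc))
     else if s \<le> 0 then ln rc
     else if s \<le> s2 then - ln (inverse rc * cos (rc * s))
     else - ln (cosh (s - sb)) + ln 2 / 2)"

definition cb_params :: "real \<Rightarrow> real \<Rightarrow> real \<Rightarrow> real \<Rightarrow> real \<Rightarrow> real \<Rightarrow> bool" where
  "cb_params lc rc s0 se s2 sb \<longleftrightarrow>
     - (lc + pi / 2) / rc < s0 \<and> s0 < - lc / rc \<and>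
     s0 < se \<and> se < - lc / rc \<and>
     0 < s2 \<and> s2 < pi / (2 * rc) \<and>
     s2 < sb \<and>
     (u_cb lc rc s0 se s2 sb) C1_differentiable_on UNIV"

text \<open>The cylindrical coordinate s of a point z \<noteq> 0, from z = exp(-s + se + i theta).\<close>
definition cb_s :: "real \<Rightarrow> complex \<Rightarrow> real" where
  "cb_s se z = se - ln (cmod z)"

text \<open>Gaussian curvature K = - e^{-2u} (Laplacian u) in the (s,theta) coordinates;
  u depends only on s, so the Laplacian is u''(s).\<close>
definition K_cb :: "real \<Rightarrow> real \<Rightarrow> real \<Rightarrow> real \<Rightarrow> real \<Rightarrow> real \<Rightarrow> complex \<Rightarrow> real" where
  "K_cb lc rc s0 se s2 sb z =
     - exp (- 2 * u_cb lc rc s0 se s2 sb (cb_s se z))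
       * deriv (deriv (u_cb lc rc s0 se s2 sb)) (cb_s se z)"

definition U_i :: "real \<Rightarrow> real \<Rightarrow> real \<Rightarrow> real \<Rightarrow> complex set" where
  "U_i lc rc s0 se = {z. z \<noteq> 0 \<and> s0 < cb_s se z \<and> cb_s se z < - lc / rc}"

definition U_c :: "real \<Rightarrow> real \<Rightarrow> real \<Rightarrow> complex set" where
  "U_c lc rc se = {z. z \<noteq> 0 \<and> - lc / rc < cb_s se z \<and> cb_s se z < 0}"

definition U_b :: "real \<Rightarrow> complex set" where
  "U_b se = {z. z \<noteq> 0 \<and> 0 < cb_s se z} \<union> {0}"

text \<open>Riemannian area: g = e^{2u}(ds^2 + dtheta^2) = e^{2u} |dz|^2 / |z|^2.\<close>
definition vol_cb :: "real \<Rightarrow> real \<Rightarrow> real \<Rightarrow> real \<Rightarrow> real \<Rightarrow> real \<Rightarrow> complex set \<Rightarrow> ennreal" where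
  "vol_cb lc rc s0 se s2 sb A =
     (\<integral>\<^sup>+ z \<in> A. ennreal (exp (2 * u_cb lc rc s0 se s2 sb (cb_s se z)) / (cmod z)\<^sup>2) \<partial>lborel)"

end

theory Submission
  imports Defs
begin

lemma eq_from_right:
  fixes f g :: "real \<Rightarrow> real"
  assumes "isCont f x" "isCont g x" "x < b" "\<And>y. x < y \<Longrightarrow> y < b \<Longrightarrow> f y = g y"
  shows "f x = g x"
proof -
  have 1: "(f \<longlongrightarrow> f x) (at_right x)" using assms(1)
    by (simp add: isCont_def filterlim_at_split)
  have 2: "(g \<longlongrightarrow> g x) (at_right x)" using assms(2)
    by (simp add: isCont_def filterlim_at_split)
  have ev: "eventually (\<lambda>y. f y = g y) (at_right x)"
    using eventually_at_right_real[OF assms(3)] by eventually_elim (use assms(4) in auto)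
  have "(g \<longlongrightarrow> f x) (at_right x)" using 1 ev by (rule Lim_transform_eventually)
  then show ?thesis using 2 tendsto_unique trivial_limit_at_right_real by blast
qed

lemma eq_from_left:
  fixes f g :: "real \<Rightarrow> real"
  assumes "isCont f x" "isCont g x" "b < x" "\<And>y. b < y \<Longrightarrow> y < x \<Longrightarrow> f y = g y"
  shows "f x = g x"
proof -
  have 1: "(f \<longlongrightarrow> f x) (at_left x)" using assms(1)
    by (simp add: isCont_def filterlim_at_split)
  have 2: "(g \<longlongrightarrow> g x) (at_left x)" using assms(2)
    by (simp add: isCont_def filterlim_at_split)
  have ev: "eventually (\<lambda>y. f y = g y) (at_left x)"
    using eventually_at_left_real[OF assms(3)] by eventually_elim (use assms(4) in auto)
  have "(g \<longlongrightarrow> f x) (at_left x)" using 1 ev by (rule Lim_transform_eventually)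
  then show ?thesis using 2 tendsto_unique trivial_limit_at_left_real by blast
qed

lemma closure_annulus:
  fixes a b :: real
  assumes "0 < a" "a < b"
  shows "closure {z::complex. a < cmod z \<and> cmod z < b} = {z. a \<le> cmod z \<and> cmod z \<le> b}"
proof
  show "closure {z::complex. a < cmod z \<and> cmod z < b} \<subseteq> {z. a \<le> cmod z \<and> cmod z \<le> b}"
    by (intro closure_minimal closed_Collect_conj closed_Collect_le) (auto intro: continuous_intros)
next
  show "{z. a \<le> cmod z \<and> cmod z \<le> b} \<subseteq> closure {z::complex. a < cmod z \<and> cmod z < b}"
  proof
    fix z :: complex assume z: "z \<in> {z. a \<le> cmod z \<and> cmod z \<le> b}"
    define r where "r = cmod z"
    have r: "a \<le> r" "r \<le> b" using z r_def by auto
    have r0: "r > 0" using r assms by simp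
    define m where "m = (a + b) / 2"
    have m: "a < m" "m < b" using assms m_def by auto
    show "z \<in> closure {z::complex. a < cmod z \<and> cmod z < b}"
      unfolding closure_approachable
    proof (intro allI impI)
      fix e :: real assume e: "e > 0"
      define d where "d = min (1/2) (e / (b - a + 1))"
      have d: "0 < d" "d < 1" "d \<le> e / (b - a + 1)" using e assms d_def by auto
      define c where "c = (1 - d) * r + d * m"
      have "(1 - d) * a \<le> (1 - d) * r" "(1 - d) * r \<le> (1 - d) * b"
        using r d by (auto intro: mult_left_mono)
      moreover have "d * a < d * m" "d * m < d * b" using m d by auto
      ultimately have c: "a < c" "c < b" unfolding c_def by (auto simp: algebra_simps)
      define y where "y = complex_of_real (c / r) * z"
      have "cmod y = \<bar>c / r\<bar> * r" unfolding y_def norm_mult norm_of_real r_def by simp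
      then have ny: "cmod y = c" using r0 c assms by simp
      have yz: "y - z = complex_of_real (c / r - 1) * z" by (simp add: y_def algebra_simps)
      have "dist y z = cmod (complex_of_real (c / r - 1) * z)" unfolding dist_norm yz ..
      also have "\<dots> = \<bar>c / r - 1\<bar> * r" unfolding norm_mult norm_of_real r_def ..
      also have "\<dots> = \<bar>c - r\<bar>" using r0 by (simp add: abs_mult[symmetric] field_simps)
      also have "\<dots> = \<bar>d * (m - r)\<bar>" by (simp add: c_def algebra_simps)
      also have "\<dots> = d * \<bar>m - r\<bar>" using d by (simp add: abs_mult)
      also have "\<dots> \<le> d * (b - a)" using d r m by (intro mult_left_mono) auto
      also have "\<dots> < e"
      proof -
        have "d * (b - a + 1) \<le> e" using d assms by (simp add: field_simps)
        then show ?thesis using d by (simp add: algebra_simps)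
      qed
      finally show "\<exists>y\<in>{z. a < cmod z \<and> cmod z < b}. dist y z < e" using ny c by auto
    qed
  qed
qed

lemma exp2: "exp (2 * x) = (exp (x::real))\<^sup>2"
  by (simp add: power2_eq_square exp_add[symmetric])

locale cb =
  fixes lc rc s0 se s2 sb :: real
  assumes lc: "lc > 0" and rc: "0 < rc" and rc10: "rc < 1/10"
    and P: "cb_params lc rc s0 se s2 sb"
begin

abbreviation "u \<equiv> u_cb lc rc s0 se s2 sb"
definition "D = deriv u"

lemma ranges: "- (lc + pi / 2) / rc < s0" "s0 < - lc / rc" "s0 < se" "se < - lc / rc"
   "0 < s2" "s2 < pi / (2 * rc)" "s2 < sb"
  using P by (auto simp: cb_params_def)

lemma lcrc: "- lc / rc < 0" using lc rc by simp

lemma C1: "u C1_differentiable_on UNIV" using P by (simp add: cb_params_def)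

lemma uD: "(u has_field_derivative D x) (at x)"
  using C1 unfolding C1_differentiable_on_eq D_def
  by (simp add: DERIV_deriv_iff_real_differentiable)

lemma contD: "isCont D x"
proof -
  have "continuous_on UNIV (\<lambda>x. vector_derivative u (at x))" using C1 by (simp add: C1_differentiable_on_eq)
  moreover have "vector_derivative u (at x) = D x" for x
    using uD[of x] by (simp add: vector_derivative_at has_real_derivative_iff_has_vector_derivative)
  ultimately have "continuous_on UNIV D" by simp
  then show ?thesis by (simp add: continuous_on_eq_continuous_at)
qed

lemma contu: "isCont u x" using uD DERIV_isCont by blast

lemma D_open:
  assumes "open S" "x \<in> S" "\<And>y. y \<in> S \<Longrightarrow> u y = g y" "(g has_field_derivative g') (at x)"
  shows "D x = g'"
  using has_field_derivative_transform_within_open[OF uD assms(1,2,3)] assms(4) DERIV_unique by blast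

lemma u_e: "s \<le> s0 \<Longrightarrow> u s = - s + se" by (simp add: u_cb_def)
lemma u_i: "s0 < s \<Longrightarrow> s < - lc / rc \<Longrightarrow> u s = - ln (inverse rc * cos (rc * s + lc))"
  by (simp add: u_cb_def)
lemma u_c: "- lc / rc \<le> s \<Longrightarrow> s \<le> 0 \<Longrightarrow> u s = ln rc"
  using ranges by (simp add: u_cb_def)
lemma u_b: "0 < s \<Longrightarrow> s \<le> s2 \<Longrightarrow> u s = - ln (inverse rc * cos (rc * s))"
  using ranges lcrc by (simp add: u_cb_def)
lemma u_cap: "s2 < s \<Longrightarrow> u s = - ln (cosh (s - sb)) + ln 2 / 2"
  using ranges lcrc by (simp add: u_cb_def)

lemma deriv_gi:
  assumes "cos (rc * s + a) > 0"
  shows "((\<lambda>s. - ln (inverse rc * cos (rc * s + a))) has_real_derivative rc * tan (rc * s + a)) (at s)"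
  using assms rc
  by (auto intro!: derivative_eq_intros simp: tan_def field_simps)

lemma deriv_gb:
  assumes "cos (rc * s) > 0"
  shows "((\<lambda>s. - ln (inverse rc * cos (rc * s))) has_real_derivative rc * tan (rc * s)) (at s)"
  using deriv_gi[of s 0] assms by simp

lemma deriv_gcap:
  "((\<lambda>s. - ln (cosh (s - sb)) + ln 2 / 2) has_real_derivative - tanh (s - sb)) (at s)"
proof -
  have "cosh (s - sb) > 0" by (simp add: cosh_real_pos)
  then show ?thesis by (auto intro!: derivative_eq_intros simp: tanh_def field_simps)
qed

lemma cos_i: "s0 \<le> s \<Longrightarrow> s \<le> - lc / rc \<Longrightarrow> cos (rc * s + lc) > 0"
proof -
  assume a: "s0 \<le> s" "s \<le> - lc / rc"
  have "- (lc + pi / 2) < rc * s0" using ranges(1) rc by (simp add: field_simps)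
  moreover have "rc * s0 \<le> rc * s" using a rc by simp
  moreover have "rc * s \<le> - lc" using a rc by (simp add: field_simps)
  ultimately show ?thesis using lc pi_gt_zero by (intro cos_gt_zero_pi) auto
qed

lemma cos_b: "0 \<le> s \<Longrightarrow> s \<le> s2 \<Longrightarrow> cos (rc * s) > 0"
proof -
  assume a: "0 \<le> s" "s \<le> s2"
  have "rc * s2 < pi / 2" using ranges(6) rc by (simp add: field_simps)
  moreover have "rc * s \<le> rc * s2" using a rc by simp
  moreover have "0 \<le> rc * s" using a rc by simp
  ultimately show ?thesis using pi_gt_zero by (intro cos_gt_zero_pi) auto
qed

lemma D_e: "s < s0 \<Longrightarrow> D s = -1"
  by (rule D_open[of "{..<s0}" s "\<lambda>s. - s + se"]) (auto simp: u_e intro!: derivative_eq_intros)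

lemma D_i: "s0 < s \<Longrightarrow> s < - lc / rc \<Longrightarrow> D s = rc * tan (rc * s + lc)"
  by (rule D_open[of "{s0<..<- lc / rc}" s "\<lambda>s. - ln (inverse rc * cos (rc * s + lc))"])
     (auto simp: u_i intro!: deriv_gi cos_i)

lemma D_c: "- lc / rc < s \<Longrightarrow> s < 0 \<Longrightarrow> D s = 0"
  by (rule D_open[of "{- lc / rc<..<0}" s "\<lambda>s. ln rc"]) (auto simp: u_c intro!: derivative_eq_intros)

lemma D_b: "0 < s \<Longrightarrow> s < s2 \<Longrightarrow> D s = rc * tan (rc * s)"
  by (rule D_open[of "{0<..<s2}" s "\<lambda>s. - ln (inverse rc * cos (rc * s))"])
     (auto simp: u_b intro!: deriv_gb cos_b)

lemma D_cap: "s2 < s \<Longrightarrow> D s = - tanh (s - sb)"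
  by (rule D_open[of "{s2<..}" s, OF _ _ _ deriv_gcap]) (auto simp: u_cap)

lemma D_s0: "D s0 = -1" "D s0 = rc * tan (rc * s0 + lc)"
proof -
  show "D s0 = -1"
    by (rule eq_from_left[where f=D and x=s0 and g="\<lambda>_. -1" and b="s0 - 1"]) (auto simp: contD D_e)
  show "D s0 = rc * tan (rc * s0 + lc)"
    using cos_i[of s0] ranges
    by (intro eq_from_right[where f=D and x=s0 and g="\<lambda>s. rc * tan (rc * s + lc)" and b="- lc / rc"])
       (auto simp: contD D_i intro!: continuous_intros)
qed

lemma u_s0: "u s0 = - ln (inverse rc * cos (rc * s0 + lc))"
  using cos_i[of s0] ranges rc
  by (intro eq_from_right[where f=u and x=s0 and g="\<lambda>s. - ln (inverse rc * cos (rc * s + lc))" and b="- lc / rc"])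
     (auto simp: contu u_i intro!: continuous_intros)

lemma D_0: "D 0 = 0"
  using lcrc by (intro eq_from_left[where f=D and x=0 and g="\<lambda>_. 0" and b="- lc / rc"]) (auto simp: contD D_c)

lemma D_s2: "D s2 = rc * tan (rc * s2)" "D s2 = - tanh (s2 - sb)"
proof -
  show "D s2 = rc * tan (rc * s2)"
    using cos_b[of s2] ranges
    by (intro eq_from_left[where f=D and x=s2 and g="\<lambda>s. rc * tan (rc * s)" and b=0])
       (auto simp: contD D_b intro!: continuous_intros)
  show "D s2 = - tanh (s2 - sb)"
    by (intro eq_from_right[where f=D and x=s2 and g="\<lambda>s. - tanh (s - sb)" and b="s2 + 1"])
       (auto simp: contD D_cap intro!: continuous_intros)
qed

lemma u_s2: "u s2 = - ln (cosh (s2 - sb)) + ln 2 / 2"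
  by (intro eq_from_right[where f=u and x=s2 and g="\<lambda>s. - ln (cosh (s - sb)) + ln 2 / 2" and b="s2 + 1"])
     (auto simp: contu u_cap intro!: continuous_intros)

lemma tan_s0: "tan (rc * s0 + lc) = - inverse rc"
  using D_s0 rc by (auto simp: field_simps)

lemma s0_eq: "s0 = - (lc + arctan (inverse rc)) / rc"
proof -
  have a: "- (pi/2) < rc * s0 + lc" "rc * s0 + lc < pi / 2"
    using ranges(1,2) rc lc pi_gt_zero by (auto simp: field_simps)
  have "arctan (tan (rc * s0 + lc)) = rc * s0 + lc" using a by (intro arctan_tan) auto
  then have "rc * s0 + lc = - arctan (inverse rc)" using tan_s0 by (simp add: arctan_minus)
  then show ?thesis using rc by (simp add: field_simps)
qed

lemma se_eq: "se = s0 + ln (1 + rc\<^sup>2) / 2"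
proof -
  define x where "x = rc * s0 + lc"
  have c: "cos x > 0" unfolding x_def using ranges by (intro cos_i) auto
  have t: "sin x = - inverse rc * cos x" using tan_s0 c unfolding x_def[symmetric]
    by (simp add: tan_def field_simps)
  have "sin x ^ 2 + cos x ^ 2 = 1" by simp
  then have "cos x ^ 2 * (inverse rc ^ 2 + 1) = 1" using t by (simp add: power_mult_distrib algebra_simps)
  then have "cos x ^ 2 * (1 + rc\<^sup>2) = rc\<^sup>2" using rc
    by (simp add: field_simps power_mult_distrib)
  then have "cos x ^ 2 = rc\<^sup>2 / (1 + rc\<^sup>2)"
    by (metis add_pos_nonneg zero_less_one zero_le_power2 less_irrefl eq_divide_eq)
  then have c2: "(inverse rc * cos x) ^ 2 = inverse (1 + rc\<^sup>2)" using rc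
    by (simp add: power_mult_distrib power_inverse divide_simps)
  have "inverse rc * cos x = sqrt (inverse (1 + rc\<^sup>2))"
    using c rc c2 by (metis less_imp_le positive_imp_inverse_positive real_sqrt_unique mult_pos_pos)
  then have "- ln (inverse rc * cos x) = ln (1 + rc\<^sup>2) / 2"
    by (simp add: ln_sqrt ln_inverse add_pos_nonneg)
  moreover have "u s0 = - s0 + se" by (simp add: u_e)
  ultimately show ?thesis using u_s0 unfolding x_def by simp
qed

lemma cosh_tanh: "(cosh (x::real))\<^sup>2 * (1 - (tanh x)\<^sup>2) = 1"
proof -
  have "cosh x > 0" by (simp add: cosh_real_pos)
  then have "(cosh x)\<^sup>2 * (1 - (tanh x)\<^sup>2) = (cosh x)\<^sup>2 - (sinh x)\<^sup>2"
    by (simp add: tanh_def power_divide field_simps)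
  then show ?thesis by (simp add: cosh_square_eq)
qed

definition "tt = rc * tan (rc * s2)"

lemma tt_eq: "tt = tanh (sb - s2)"
  using D_s2 unfolding tt_def by (metis minus_diff_eq tanh_minus)

lemma tt_pos: "0 < tt" using tt_eq ranges by simp

lemma tt_lt1: "tt < 1" using tt_eq tanh_real_lt_1 by simp

lemma cosh_s2: "cosh (sb - s2) = sqrt 2 * (inverse rc * cos (rc * s2))"
proof -
  have cb: "cos (rc * s2) > 0" using cos_b ranges by simp
  have "- ln (inverse rc * cos (rc * s2)) = - ln (cosh (s2 - sb)) + ln 2 / 2"
    using u_s2 u_b[of s2] ranges by simp
  then have "ln (cosh (s2 - sb)) = ln (inverse rc * cos (rc * s2)) + ln (sqrt 2)"
    by (simp add: ln_sqrt)
  also have "\<dots> = ln (sqrt 2 * (inverse rc * cos (rc * s2)))"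
    using cb rc by (simp add: ln_mult)
  finally have "ln (cosh (s2 - sb)) = ln (sqrt 2 * (inverse rc * cos (rc * s2)))" .
  then have "cosh (s2 - sb) = sqrt 2 * (inverse rc * cos (rc * s2))"
    using cb rc by (subst (asm) ln_inj_iff) (auto simp: cosh_real_pos)
  then show ?thesis by (metis cosh_minus minus_diff_eq)
qed

lemma tt_sq: "3 * tt\<^sup>2 = 2 - rc\<^sup>2"
proof -
  define c where "c = cos (rc * s2)"
  have cb: "c > 0" using cos_b ranges c_def by simp
  have "c * tt = rc * sin (rc * s2)" using cb rc unfolding tt_def c_def by (simp add: tan_def field_simps)
  then have "(c * tt)^2 = rc^2 * sin (rc * s2) ^ 2" by (simp add: power_mult_distrib)
  moreover have "sin (rc * s2) ^ 2 = 1 - c ^ 2" by (simp add: c_def sin_squared_eq)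
  ultimately have e1: "c^2 * (tt^2 + rc^2) = rc^2"
    by (simp add: power_mult_distrib algebra_simps)
  have "(cosh (sb - s2))\<^sup>2 * (1 - tt\<^sup>2) = 1" using cosh_tanh tt_eq by simp
  then have "2 * c^2 * (1 - tt\<^sup>2) = rc^2" using cosh_s2 rc unfolding c_def[symmetric]
    by (simp add: power_mult_distrib field_simps)
  then have "2 * c^2 * (1 - tt\<^sup>2) = c^2 * (tt^2 + rc^2)" using e1 by simp
  then have "2 * (1 - tt\<^sup>2) = (tt^2 + rc^2)" using cb by simp
  then show ?thesis by simp
qed

lemma sb_bound: "sb \<le> 7 / 4 / rc"
proof -
  define y where "y = sb - s2"
  have y: "0 < y" using ranges y_def by simp
  have "rc\<^sup>2 \<ge> 0" by simp
  moreover have "(41/50::real)\<^sup>2 = 1681/2500" by (simp add: power2_eq_square)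
  ultimately have "tt\<^sup>2 \<le> (41/50)\<^sup>2" using tt_sq by linarith
  then have t: "tt \<le> 41/50" using tt_pos by (simp add: power2_le_iff_abs_le)
  define w where "w = exp (- 2 * y)"
  have w: "w > 0" by (simp add: w_def)
  have "tt = (1 - w) / (1 + w)" using tt_eq by (simp add: tanh_real_altdef w_def y_def)
  then have e: "1 - w = tt * (1 + w)" using w by (simp add: field_simps)
  have "tt * (1 + w) \<le> 41/50 * (1 + w)" using t w by (intro mult_right_mono) auto
  then have "1 - w \<le> 41/50 + 41/50 * w" using e by (simp add: algebra_simps)
  then have w2: "w \<ge> 9 / 91" by linarith
  have "y < 179/100"
  proof (rule ccontr)
    assume "\<not> y < 179/100"
    then have y1: "179/100 \<le> y" by simp
    have "(179/100)\<^sup>2 \<le> y\<^sup>2" using y1 by (intro power_mono) auto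
    then have "exp y \<ge> 1 + 179/100 + (179/100)\<^sup>2 / 2"
      using exp_lower_Taylor_quadratic[of y] y1 by linarith
    then have "439/100 \<le> exp y" by (simp add: power2_eq_square)
    then have "exp y ^ 2 \<ge> (439/100)\<^sup>2" by (intro power_mono) auto
    moreover have "exp y ^ 2 * w = 1" by (simp add: w_def power2_eq_square exp_add[symmetric])
    ultimately have "(439/100)\<^sup>2 * (9/91) \<le> exp y ^ 2 * w"
      using w2 w by (intro mult_mono) auto
    then show False using \<open>exp y ^ 2 * w = 1\<close> by (simp add: power2_eq_square)
  qed
  have "s2 * rc < pi / 2" using ranges(6) rc by (simp add: field_simps)
  then have "sb * rc < pi / 2 + 179/100 * rc" using \<open>y < 179/100\<close> rc unfolding y_def
    by (smt (verit) mult_strict_right_mono distrib_right)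
  also have "\<dots> \<le> 7 / 4" using pi_approx rc10 by simp
  finally show ?thesis using rc by (simp add: field_simps)
qed

lemma cbs: "z \<noteq> 0 \<Longrightarrow> cmod z = exp (se - cb_s se z)"
  by (simp add: cb_s_def)

lemma U_c_eq: "U_c lc rc se = {z. exp se < cmod z \<and> cmod z < exp (se + lc / rc)}"
proof -
  have "z \<in> U_c lc rc se \<longleftrightarrow> exp se < cmod z \<and> cmod z < exp (se + lc / rc)" for z
  proof (cases "z = 0")
    case False
    then have "cmod z = exp (ln (cmod z))" by simp
    then show ?thesis using False unfolding U_c_def cb_s_def
      by (smt (verit, best) exp_less_cancel_iff mem_Collect_eq minus_divide_left)
  qed (auto simp: U_c_def)
  then show ?thesis by auto
qed

lemma sqrt_eq: "sqrt (1 + rc\<^sup>2) = exp (se - s0)"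
proof -
  have p: "1 + rc\<^sup>2 > 0" by (simp add: add_pos_nonneg)
  have "exp (se - s0) = exp (ln (1 + rc\<^sup>2) / 2)" using se_eq by simp
  also have "\<dots> = (1 + rc\<^sup>2) powr (1/2)" using p by (simp add: powr_def)
  also have "\<dots> = sqrt (1 + rc\<^sup>2)" using p by (simp add: powr_half_sqrt)
  finally show ?thesis by simp
qed

lemma ball_eq: "ball 0 (sqrt (1 + rc\<^sup>2)) = U_i lc rc s0 se \<union> closure (U_c lc rc se) \<union> U_b se"
proof -
  have cl: "closure (U_c lc rc se) = {z. exp se \<le> cmod z \<and> cmod z \<le> exp (se + lc / rc)}"
    unfolding U_c_eq using lc rc by (intro closure_annulus) auto
  have "z \<in> ball 0 (sqrt (1 + rc\<^sup>2)) \<longleftrightarrow> z \<in> U_i lc rc s0 se \<union> closure (U_c lc rc se) \<union> U_b se" for z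
  proof (cases "z = 0")
    case True
    then show ?thesis by (simp add: U_b_def add_pos_nonneg)
  next
    case False
    define L where "L = ln (cmod z)"
    have z: "cmod z = exp L" using False L_def by simp
    have cs: "cb_s se z = se - L" by (simp add: cb_s_def L_def)
    have "z \<in> ball 0 (sqrt (1 + rc\<^sup>2)) \<longleftrightarrow> L < se - s0"
      unfolding sqrt_eq mem_ball dist_0_norm z by simp
    moreover have "z \<in> U_i lc rc s0 se \<union> closure (U_c lc rc se) \<union> U_b se \<longleftrightarrow>
       (s0 < se - L \<and> se - L < - lc / rc) \<or> (se \<le> L \<and> L \<le> se + lc / rc) \<or> 0 < se - L"
      unfolding cl U_i_def U_b_def Un_iff mem_Collect_eq cs z using False by simp
    ultimately show ?thesis using ranges lcrc by (auto simp: field_simps)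
  qed
  then show ?thesis by blast
qed

lemma D2_open:
  assumes "open S" "s \<in> S" "\<And>y. y \<in> S \<Longrightarrow> D y = g y" "(g has_field_derivative g') (at s)"
  shows "D differentiable (at s) \<and> deriv D s = g'"
proof -
  have "(D has_field_derivative g') (at s)"
    using has_field_derivative_transform_within_open[OF assms(4,1,2)] assms(3) by metis
  then show ?thesis using DERIV_imp_deriv real_differentiable_def by blast
qed

lemma K_pt:
  assumes "s \<notin> {s0, - lc / rc, 0, s2}"
  shows "D differentiable (at s) \<and> - exp (- 2 * u s) * deriv D s \<in> {-1 .. 1/2}"
proof -
  consider "s < s0" | "s0 < s \<and> s < - lc / rc" | "- lc / rc < s \<and> s < 0" | "0 < s \<and> s < s2" | "s2 < s"
    using assms by force
  then show ?thesis
  proof cases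
    case 1
    have "D differentiable (at s) \<and> deriv D s = 0"
      using 1 by (intro D2_open[of "{..<s0}" s "\<lambda>_. -1"]) (auto simp: D_e)
    then show ?thesis by simp
  next
    case 2
    have c: "cos (rc * s + lc) > 0" using 2 by (intro cos_i) auto
    have "D differentiable (at s) \<and> deriv D s = rc * (inverse (cos (rc * s + lc) ^ 2) * rc)"
      using 2 c by (intro D2_open[of "{s0<..<- lc / rc}" s "\<lambda>s. rc * tan (rc * s + lc)"])
        (auto simp: D_i intro!: derivative_eq_intros)
    moreover have "exp (- 2 * u s) = (inverse rc * cos (rc * s + lc))\<^sup>2"
    proof -
      have "exp (- 2 * u s) = exp (2 * ln (inverse rc * cos (rc * s + lc)))" using 2 by (simp add: u_i)
      also have "\<dots> = exp (ln (inverse rc * cos (rc * s + lc))) ^ 2" by (simp add: exp_of_nat_mult[symmetric])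
      also have "\<dots> = (inverse rc * cos (rc * s + lc))\<^sup>2" using c rc by simp
      finally show ?thesis .
    qed
    ultimately have d: "D differentiable (at s)" "deriv D s = rc * (inverse (cos (rc * s + lc) ^ 2) * rc)"
      and e: "exp (- 2 * u s) = (inverse rc * cos (rc * s + lc))\<^sup>2" by blast+
    have "exp (- 2 * u s) * deriv D s = (inverse rc * cos (rc * s + lc))\<^sup>2 * (rc * (inverse (cos (rc * s + lc) ^ 2) * rc))"
      by (simp only: d e)
    also have "\<dots> = 1" using c rc by (simp add: field_simps power2_eq_square)
    finally have "D differentiable (at s)" "exp (- 2 * u s) * deriv D s = 1" using d by auto
    then show ?thesis by simp
  next
    case 3
    have "D differentiable (at s) \<and> deriv D s = 0"
      using 3 by (intro D2_open[of "{- lc / rc<..<0}" s "\<lambda>_. 0"]) (auto simp: D_c)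
    then show ?thesis by simp
  next
    case 4
    have c: "cos (rc * s) > 0" using 4 by (intro cos_b) auto
    have "D differentiable (at s) \<and> deriv D s = rc * (inverse (cos (rc * s) ^ 2) * rc)"
      using 4 c by (intro D2_open[of "{0<..<s2}" s "\<lambda>s. rc * tan (rc * s)"])
        (auto simp: D_b intro!: derivative_eq_intros)
    moreover have "exp (- 2 * u s) = (inverse rc * cos (rc * s))\<^sup>2"
    proof -
      have "exp (- 2 * u s) = exp (2 * ln (inverse rc * cos (rc * s)))" using 4 by (simp add: u_b)
      also have "\<dots> = exp (ln (inverse rc * cos (rc * s))) ^ 2" by (simp add: exp_of_nat_mult[symmetric])
      also have "\<dots> = (inverse rc * cos (rc * s))\<^sup>2" using c rc by simp
      finally show ?thesis .
    qed
    ultimately have d: "D differentiable (at s)" "deriv D s = rc * (inverse (cos (rc * s) ^ 2) * rc)"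
      and e: "exp (- 2 * u s) = (inverse rc * cos (rc * s))\<^sup>2" by blast+
    have "exp (- 2 * u s) * deriv D s = (inverse rc * cos (rc * s))\<^sup>2 * (rc * (inverse (cos (rc * s) ^ 2) * rc))"
      by (simp only: d e)
    also have "\<dots> = 1" using c rc by (simp add: field_simps power2_eq_square)
    finally have "D differentiable (at s)" "exp (- 2 * u s) * deriv D s = 1" using d by auto
    then show ?thesis by simp
  next
    case 5
    have "D differentiable (at s) \<and> deriv D s = - (1 - (tanh (s - sb))\<^sup>2)"
      using 5 by (intro D2_open[of "{s2<..}" s "\<lambda>s. - tanh (s - sb)"])
        (auto simp: D_cap cosh_real_pos intro!: derivative_eq_intros)
    moreover have "exp (- 2 * u s) = (cosh (s - sb))\<^sup>2 / 2"
    proof -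
      have "exp (- 2 * u s) = exp (2 * ln (cosh (s - sb)) - ln 2)" using 5 by (simp add: u_cap)
      also have "\<dots> = exp (2 * ln (cosh (s - sb))) / exp (ln 2)"
        by (simp add: exp_diff)
      also have "\<dots> = exp (ln (cosh (s - sb))) ^ 2 / exp (ln 2)"
        by (simp only: exp2)
      also have "\<dots> = (cosh (s - sb))\<^sup>2 / 2" by (simp add: cosh_real_pos)
      finally show ?thesis .
    qed
    ultimately have d: "D differentiable (at s)" "deriv D s = - (1 - (tanh (s - sb))\<^sup>2)"
      and e: "exp (- 2 * u s) = (cosh (s - sb))\<^sup>2 / 2" by blast+
    have "- exp (- 2 * u s) * deriv D s = (cosh (s - sb))\<^sup>2 * (1 - (tanh (s - sb))\<^sup>2) / 2"
      by (simp only: d e)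
    also have "\<dots> = 1/2" using cosh_tanh[of "s - sb"] by simp
    finally show ?thesis using d by simp
  qed
qed

lemma sphere_null: "sphere (0::complex) r \<in> null_sets lborel"
  using negligible_sphere[of "0::complex" r]
  by (auto simp: null_sets_completion_iff negligible_iff_null_sets negligible_convex_frontier)

lemma AE_K: "AE z in (lborel :: complex measure).
            deriv u differentiable (at (cb_s se z)) \<and>
            K_cb lc rc s0 se s2 sb z \<in> {-1 .. 1 / 2}"
proof -
  let ?P = "\<lambda>z. deriv u differentiable (at (cb_s se z)) \<and> K_cb lc rc s0 se s2 sb z \<in> {-1 .. 1 / 2}"
  let ?N = "sphere (0::complex) (exp (se - s0)) \<union> sphere 0 (exp (se - (- lc / rc)))
     \<union> sphere 0 (exp (se - 0)) \<union> sphere 0 (exp (se - s2))"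
  have N: "?N \<in> null_sets lborel" by (intro null_sets.Un sphere_null)
  have sub: "{z \<in> space lborel. \<not> ?P z} \<subseteq> ?N"
  proof (intro subsetI)
    fix z :: complex
    assume "z \<in> {z \<in> space lborel. \<not> ?P z}"
    then have nP: "\<not> ?P z" by simp
    have "cb_s se z \<in> {s0, - lc / rc, 0, s2}"
      using K_pt[of "cb_s se z"] nP unfolding K_cb_def D_def by auto
    moreover have "z \<noteq> 0"
    proof
      assume "z = 0"
      then have "cb_s se z = se" by (simp add: cb_s_def)
      then show False using \<open>cb_s se z \<in> _\<close> ranges lcrc by auto
    qed
    ultimately show "z \<in> ?N" using cbs[of z] by auto
  qed
  show ?thesis using AE_I'[OF N sub] .
qed

lemma meas_D[measurable]: "D \<in> borel_measurable borel"
  using contD by (intro borel_measurable_continuous_onI) (simp add: continuous_at_imp_continuous_on)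

lemma meas_u[measurable]: "u \<in> borel_measurable borel"
  using contu by (intro borel_measurable_continuous_onI) (simp add: continuous_at_imp_continuous_on)

lemma meas_cbs[measurable]: "cb_s se \<in> borel_measurable borel"
  unfolding cb_s_def by measurable

definition "H \<sigma> = exp (2 * u \<sigma> + 2 * \<sigma> - 2 * se)"
definition "H' \<sigma> = (2 * D \<sigma> + 2) * H \<sigma>"

lemma meas_H'[measurable]: "H' \<in> borel_measurable borel"
  unfolding H'_def H_def by measurable

lemma H_der: "(H has_real_derivative H' \<sigma>) (at \<sigma>)"
  unfolding H_def H'_def by (auto intro!: derivative_eq_intros uD)

lemma D_ge: "0 \<le> \<sigma> \<Longrightarrow> -1 \<le> D \<sigma>"
proof -
  assume s: "0 \<le> \<sigma>"
  consider "\<sigma> = 0" | "0 < \<sigma> \<and> \<sigma> < s2" | "\<sigma> = s2" | "s2 < \<sigma>" using s by force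
  then show ?thesis
  proof cases
    case 2
    have "cos (rc * \<sigma>) > 0" using 2 by (intro cos_b) auto
    moreover have "sin (rc * \<sigma>) \<ge> 0"
    proof (intro sin_ge_zero)
      have "rc * \<sigma> < rc * s2" using 2 rc by simp
      moreover have "rc * s2 < pi / 2" using ranges(6) rc by (simp add: field_simps)
      ultimately show "rc * \<sigma> \<le> pi" using pi_gt_zero by linarith
      show "0 \<le> rc * \<sigma>" using 2 rc by simp
    qed
    ultimately have "tan (rc * \<sigma>) \<ge> 0" by (simp add: tan_def)
    then show ?thesis using 2 D_b rc by (smt (verit) mult_nonneg_nonneg)
  next
    case 3 then show ?thesis using D_s2(2) tanh_real_lt_1[of "s2 - sb"] by simp
  next
    case 4 then show ?thesis using D_cap tanh_real_lt_1[of "\<sigma> - sb"] by simp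
  qed (simp add: D_0)
qed

lemma H'_nonneg: "0 \<le> \<sigma> \<Longrightarrow> 0 \<le> H' \<sigma>"
proof -
  assume "0 \<le> \<sigma>"
  then have "0 \<le> 2 * D \<sigma> + 2" using D_ge by force
  then show ?thesis unfolding H'_def H_def by simp
qed

lemma H_mono: "0 \<le> a \<Longrightarrow> a \<le> b \<Longrightarrow> H a \<le> H b"
proof -
  assume ab: "0 \<le> a" "a \<le> b"
  show ?thesis
  proof (rule DERIV_nonneg_imp_nondecreasing[of a b H])
    fix x assume "a \<le> x" "x \<le> b"
    then show "\<exists>y. (H has_real_derivative y) (at x) \<and> 0 \<le> y"
      using H_der H'_nonneg ab by (intro exI[of _ "H' x"]) auto
  qed (use ab in auto)
qed

lemma H_FTC: "0 \<le> s \<Longrightarrow> ennreal (H s - H 0) = (\<integral>\<^sup>+\<sigma>. ennreal (H' \<sigma>) * indicator {0..s} \<sigma> \<partial>lborel)"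
  by (rule nn_integral_FTC_Icc[symmetric]) (auto intro: H_der H'_nonneg)


definition "G x = (2 * D x + 2) * exp (2 * u x)"

lemma meas_G[measurable]: "G \<in> borel_measurable borel"
  unfolding G_def by measurable

lemma on_b: "0 \<le> x \<Longrightarrow> x \<le> s2 \<Longrightarrow> D x = rc * tan (rc * x) \<and> exp (2 * u x) = rc\<^sup>2 / (cos (rc * x))\<^sup>2"
proof -
  assume x: "0 \<le> x" "x \<le> s2"
  have c: "cos (rc * x) > 0" using x by (intro cos_b) auto
  have "D x = rc * tan (rc * x)"
  proof -
    consider "x = 0" | "0 < x \<and> x < s2" | "x = s2" using x by force
    then show ?thesis by cases (auto simp: D_0 D_b D_s2)
  qed
  moreover have "exp (2 * u x) = rc\<^sup>2 / (cos (rc * x))\<^sup>2"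
  proof (cases "x = 0")
    case True
    then have "u x = ln rc" using u_c lcrc by simp
    then have "exp (2 * u x) = (exp (ln rc))\<^sup>2" by (simp only: exp2)
    then show ?thesis using True rc by simp
  next
    case False
    then have "u x = - ln (inverse rc * cos (rc * x))" using u_b x by simp
    then have "exp (2 * u x) = (exp (- ln (inverse rc * cos (rc * x)))) ^ 2"
      by (simp only: exp2)
    then have "exp (2 * u x) = (inverse (exp (ln (inverse rc * cos (rc * x))))) ^ 2"
      by (simp only: exp_minus)
    then show ?thesis using c rc by (simp add: power_mult_distrib field_simps)
  qed
  ultimately show ?thesis by simp
qed

lemma on_cap: "s2 \<le> x \<Longrightarrow> D x = - tanh (x - sb) \<and> exp (2 * u x) = 2 * (1 - (tanh (x - sb))\<^sup>2)"
proof -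
  assume x: "s2 \<le> x"
  have "D x = - tanh (x - sb)" using x D_cap D_s2 by (cases "x = s2") auto
  moreover have "exp (2 * u x) = 2 * (1 - (tanh (x - sb))\<^sup>2)"
  proof -
    have "u x = - ln (cosh (x - sb)) + ln 2 / 2" using x u_cap u_s2 by (cases "x = s2") auto
    then have "2 * u x = ln 2 - 2 * ln (cosh (x - sb))" by simp
    then have "exp (2 * u x) = exp (ln 2) / exp (2 * ln (cosh (x - sb)))"
      by (simp add: exp_diff)
    then have "exp (2 * u x) = exp (ln 2) / (exp (ln (cosh (x - sb))))\<^sup>2"
      by (simp only: exp2)
    also have "\<dots> = 2 / (cosh (x - sb))\<^sup>2" by (simp add: cosh_real_pos)
    also have "\<dots> = 2 * (1 - (tanh (x - sb))\<^sup>2)"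
      using cosh_tanh[of "x - sb"] cosh_real_pos[of "x - sb"] by (simp add: field_simps)
    finally show ?thesis .
  qed
  ultimately show ?thesis by simp
qed

definition "F1 x = pi * (rc\<^sup>2 / (cos (rc * x))\<^sup>2 + 2 * rc * tan (rc * x))"
definition "F2 x = pi * (2 * (1 - (tanh (x - sb))\<^sup>2) + 4 * tanh (x - sb))"

lemma F1_der: "0 \<le> x \<Longrightarrow> x \<le> s2 \<Longrightarrow> (F1 has_real_derivative pi * G x) (at x)"
proof -
  assume x: "0 \<le> x" "x \<le> s2"
  have c: "cos (rc * x) > 0" using x by (intro cos_b) auto
  have "(F1 has_real_derivative pi * ((2 * (rc * tan (rc * x)) + 2) * (rc\<^sup>2 / (cos (rc * x))\<^sup>2))) (at x)"
    unfolding F1_def using c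
    apply (auto intro!: derivative_eq_intros simp: tan_def power2_eq_square field_simps)
    apply (simp add: algebra_simps flip: distrib_left)
    done
  then show ?thesis using on_b[OF x] by (simp add: G_def)
qed

lemma F2_der: "s2 \<le> x \<Longrightarrow> (F2 has_real_derivative pi * G x) (at x)"
proof -
  assume x: "s2 \<le> x"
  have "(F2 has_real_derivative pi * ((2 * (- tanh (x - sb)) + 2) * (2 * (1 - (tanh (x - sb))\<^sup>2)))) (at x)"
    unfolding F2_def
    by (auto intro!: derivative_eq_intros simp: cosh_real_pos power2_eq_square field_simps)
  then show ?thesis using on_cap[OF x] by (simp add: G_def)
qed

lemma G_nonneg: "0 \<le> x \<Longrightarrow> 0 \<le> G x"
proof -
  assume "0 \<le> x"
  then have "0 \<le> 2 * D x + 2" using D_ge by force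
  then show ?thesis unfolding G_def by simp
qed

lemma F2_lim: "(F2 \<longlongrightarrow> 4 * pi) at_top"
proof -
  have "((\<lambda>x. tanh (x - sb)) \<longlongrightarrow> 1) at_top"
  proof (rule filterlim_compose[OF tanh_real_at_top])
    have "filterlim (\<lambda>x. - sb + x) at_top at_top"
      by (rule filterlim_tendsto_add_at_top[OF tendsto_const filterlim_ident])
    then show "filterlim (\<lambda>x. x - sb) at_top at_top" by simp
  qed
  then have "(F2 \<longlongrightarrow> pi * (2 * (1 - 1\<^sup>2) + 4 * 1)) at_top"
    unfolding F2_def by (intro tendsto_intros)
  then show ?thesis by (simp add: mult.commute)
qed

lemma int_b: "(\<integral>\<^sup>+x. ennreal (pi * G x) * indicator {0..s2} x \<partial>lborel) = ennreal (F1 s2 - F1 0)"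
  using ranges by (intro nn_integral_FTC_Icc) (auto intro!: F1_der G_nonneg mult_nonneg_nonneg)

lemma int_cap: "(\<integral>\<^sup>+x. ennreal (pi * G x) * indicator {s2..} x \<partial>lborel) = ennreal (4 * pi - F2 s2)"
  using ranges by (intro nn_integral_FTC_atLeast F2_lim) (auto intro!: F2_der G_nonneg mult_nonneg_nonneg)

lemma rc_cos: "rc\<^sup>2 / (cos (rc * s2))\<^sup>2 = 2 * (1 - tt\<^sup>2)"
proof -
  have cb: "cos (rc * s2) > 0" using cos_b ranges by simp
  have "(cosh (sb - s2))\<^sup>2 = 2 * (inverse rc * cos (rc * s2))\<^sup>2"
    using cosh_s2 by (simp add: power_mult_distrib)
  moreover have "(cosh (sb - s2))\<^sup>2 * (1 - tt\<^sup>2) = 1" using cosh_tanh tt_eq by simp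
  ultimately have "2 * (inverse rc * cos (rc * s2))\<^sup>2 * (1 - tt\<^sup>2) = 1" by simp
  then show ?thesis using cb rc by (simp add: field_simps power_mult_distrib power_inverse)
qed

lemma final_arith:
  "H 0 * (pi * (exp se)\<^sup>2) = pi * rc\<^sup>2"
  "F1 s2 - F1 0 = pi * (tt\<^sup>2 + 2 * tt)"
  "4 * pi - F2 s2 = pi * (2 + 2 * tt\<^sup>2 + 4 * tt)"
proof -
  have "u 0 = ln rc" using u_c lcrc by simp
  then have "H 0 * (exp se)\<^sup>2 = exp (2 * ln rc - 2 * se) * exp (2 * se)"
    by (simp add: H_def exp2[symmetric])
  also have "\<dots> = exp (2 * ln rc)" by (simp flip: exp_add)
  also have "\<dots> = rc\<^sup>2" using rc by (simp add: exp2)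
  finally show "H 0 * (pi * (exp se)\<^sup>2) = pi * rc\<^sup>2" by (simp add: algebra_simps)
  have "F1 s2 = pi * (rc\<^sup>2 / (cos (rc * s2))\<^sup>2 + 2 * tt)" unfolding F1_def tt_def by simp
  then have "F1 s2 = pi * (2 * (1 - tt\<^sup>2) + 2 * tt)" unfolding rc_cos .
  moreover have "F1 0 = pi * rc\<^sup>2" by (simp add: F1_def)
  moreover have "rc\<^sup>2 = 2 - 3 * tt\<^sup>2" using tt_sq by simp
  ultimately have "F1 s2 - F1 0 = pi * (2 * (1 - tt\<^sup>2) + 2 * tt) - pi * (2 - 3 * tt\<^sup>2)" by simp
  then show "F1 s2 - F1 0 = pi * (tt\<^sup>2 + 2 * tt)" by (simp add: algebra_simps)
  have "tanh (s2 - sb) = - tt" using tt_eq by (metis minus_diff_eq tanh_minus)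
  then show "4 * pi - F2 s2 = pi * (2 + 2 * tt\<^sup>2 + 4 * tt)" by (simp add: F2_def algebra_simps)
qed

lemma vol_bound: "vol_cb lc rc s0 se s2 sb (U_b se) < ennreal (10 * pi)"
proof -
  define V where "V = {z::complex. z \<noteq> 0 \<and> 0 < cb_s se z}"
  define W where "W = {p::complex\<times>real. fst p \<noteq> 0 \<and> 0 < cb_s se (fst p) \<and> 0 \<le> snd p \<and> snd p \<le> cb_s se (fst p)}"
  define g where "g = (\<lambda>z \<sigma>. ennreal (H' \<sigma>) * indicator W (z, \<sigma>))"
  have Vmeas[measurable]: "V \<in> sets lborel" unfolding V_def by measurable
  have gmeas[measurable]: "case_prod g \<in> borel_measurable (lborel \<Otimes>\<^sub>M lborel)"
    unfolding g_def W_def by measurable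
  have pt: "ennreal (exp (2 * u (cb_s se z)) / (cmod z)\<^sup>2) * indicator (U_b se) z =
      ennreal (H 0) * indicator V z + (\<integral>\<^sup>+\<sigma>. g z \<sigma> \<partial>lborel)" for z
  proof (cases "z \<in> V")
    case True
    define s where "s = cb_s se z"
    have z: "z \<noteq> 0" "0 < s" using True by (auto simp: V_def s_def)
    have g_eq: "g z \<sigma> = ennreal (H' \<sigma>) * indicator {0..s} \<sigma>" for \<sigma>
      using z unfolding g_def W_def s_def by (auto simp: indicator_def)
    have I: "(\<integral>\<^sup>+\<sigma>. g z \<sigma> \<partial>lborel) = ennreal (H s - H 0)"
      using H_FTC[of s] z by (simp add: g_eq)
    have "(cmod z)\<^sup>2 = exp (2 * se - 2 * s)" using cbs[OF z(1)] by (simp add: s_def exp2[symmetric] algebra_simps)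
    then have "exp (2 * u s) / (cmod z)\<^sup>2 = H s" by (simp add: H_def exp_diff[symmetric] algebra_simps)
    moreover have "z \<in> U_b se" using z by (simp add: U_b_def s_def)
    moreover have "ennreal (H s) = ennreal (H 0) + ennreal (H s - H 0)"
      using H_mono[of 0 s] z by (simp add: H_def flip: ennreal_plus)
    ultimately show ?thesis using True I by (simp add: s_def)
  next
    case False
    have g0: "g z \<sigma> = 0" for \<sigma> using False unfolding g_def W_def V_def by auto
    have "ennreal (exp (2 * u (cb_s se z)) / (cmod z)\<^sup>2) * indicator (U_b se) z = 0"
    proof (cases "z = 0")
      case False
      then have "z \<notin> U_b se" using \<open>z \<notin> V\<close> by (auto simp: U_b_def V_def)
      then show ?thesis by simp
    qed simp
    then show ?thesis using False g0 by simp
  qed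
  have "vol_cb lc rc s0 se s2 sb (U_b se) = (\<integral>\<^sup>+z. ennreal (H 0) * indicator V z + (\<integral>\<^sup>+\<sigma>. g z \<sigma> \<partial>lborel) \<partial>lborel)"
    unfolding vol_cb_def by (intro nn_integral_cong) (rule pt)
  also have "\<dots> = (\<integral>\<^sup>+z. ennreal (H 0) * indicator V z \<partial>lborel) + (\<integral>\<^sup>+z. (\<integral>\<^sup>+\<sigma>. g z \<sigma> \<partial>lborel) \<partial>lborel)"
    by (rule nn_integral_add) measurable
  also have "(\<integral>\<^sup>+z. ennreal (H 0) * indicator V z \<partial>lborel) = ennreal (H 0) * emeasure lborel V"
    by (rule nn_integral_cmult_indicator) (use Vmeas in simp)
  also have "\<dots> \<le> ennreal (H 0) * emeasure lborel (ball (0::complex) (exp se))"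
  proof (intro mult_left_mono emeasure_mono)
    show "V \<subseteq> ball 0 (exp se)"
    proof
      fix z assume "z \<in> V"
      then have "z \<noteq> 0" "0 < cb_s se z" by (auto simp: V_def)
      then show "z \<in> ball 0 (exp se)" using cbs[of z] by simp
    qed
  qed auto
  also have "emeasure lborel (ball (0::complex) (exp se)) = ennreal (pi * (exp se)\<^sup>2)"
    by (simp add: emeasure_ball unit_ball_vol_2)
  also have "(\<integral>\<^sup>+z. (\<integral>\<^sup>+\<sigma>. g z \<sigma> \<partial>lborel) \<partial>lborel) = (\<integral>\<^sup>+\<sigma>. (\<integral>\<^sup>+z. g z \<sigma> \<partial>lborel) \<partial>lborel)"
  proof -
    have PSF: "pair_sigma_finite (lborel::complex measure) (lborel::real measure)"
      by (simp add: pair_sigma_finite_def sigma_finite_lborel)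
    show ?thesis using pair_sigma_finite.Fubini'[OF PSF gmeas] by simp
  qed
  also have "\<dots> \<le> (\<integral>\<^sup>+\<sigma>. ennreal (pi * G \<sigma>) * indicator {0..} \<sigma> \<partial>lborel)"
  proof (rule nn_integral_mono)
    fix \<sigma> :: real
    show "(\<integral>\<^sup>+z. g z \<sigma> \<partial>lborel) \<le> ennreal (pi * G \<sigma>) * indicator {0..} \<sigma>"
    proof (cases "0 \<le> \<sigma>")
      case False
      then have "g z \<sigma> = 0" for z unfolding g_def W_def by auto
      then show ?thesis by simp
    next
      case True
      have "(\<integral>\<^sup>+z. g z \<sigma> \<partial>lborel) \<le> (\<integral>\<^sup>+z. ennreal (H' \<sigma>) * indicator (cball (0::complex) (exp (se - \<sigma>))) z \<partial>lborel)"
      proof (rule nn_integral_mono)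
        fix z :: complex
        show "g z \<sigma> \<le> ennreal (H' \<sigma>) * indicator (cball 0 (exp (se - \<sigma>))) z"
        proof (cases "(z, \<sigma>) \<in> W")
          case True
          then have "z \<noteq> 0" "\<sigma> \<le> cb_s se z" by (auto simp: W_def)
          then have "z \<in> cball 0 (exp (se - \<sigma>))" using cbs[of z] by simp
          then show ?thesis using True by (simp add: g_def)
        qed (simp add: g_def)
      qed
      also have "\<dots> = ennreal (H' \<sigma>) * emeasure lborel (cball (0::complex) (exp (se - \<sigma>)))"
        by (rule nn_integral_cmult_indicator) simp
      also have "\<dots> = ennreal (H' \<sigma>) * ennreal (pi * (exp (se - \<sigma>))\<^sup>2)"
        by (simp add: emeasure_cball unit_ball_vol_2)
      also have "\<dots> = ennreal (H' \<sigma> * (pi * (exp (se - \<sigma>))\<^sup>2))"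
        by (simp add: ennreal_mult'')
      also have "H' \<sigma> * (pi * (exp (se - \<sigma>))\<^sup>2) = pi * G \<sigma>"
      proof -
        have "H \<sigma> * (exp (se - \<sigma>))\<^sup>2 = exp (2 * u \<sigma>)"
          by (simp add: H_def exp2[symmetric] flip: exp_add)
        then show ?thesis by (simp add: H'_def G_def algebra_simps)
      qed
      finally show ?thesis using True by simp
    qed
  qed
  also have "\<dots> \<le> (\<integral>\<^sup>+\<sigma>. ennreal (pi * G \<sigma>) * indicator {0..s2} \<sigma> + ennreal (pi * G \<sigma>) * indicator {s2..} \<sigma> \<partial>lborel)"
    by (intro nn_integral_mono) (auto simp: indicator_def)
  also have "\<dots> = (\<integral>\<^sup>+\<sigma>. ennreal (pi * G \<sigma>) * indicator {0..s2} \<sigma> \<partial>lborel) + (\<integral>\<^sup>+\<sigma>. ennreal (pi * G \<sigma>) * indicator {s2..} \<sigma> \<partial>lborel)"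
    by (rule nn_integral_add) measurable
  also have "\<dots> = ennreal (F1 s2 - F1 0) + ennreal (4 * pi - F2 s2)"
    by (simp add: int_b int_cap)
  finally have le: "vol_cb lc rc s0 se s2 sb (U_b se) \<le>
      ennreal (H 0) * ennreal (pi * (exp se)\<^sup>2) + (ennreal (F1 s2 - F1 0) + ennreal (4 * pi - F2 s2))"
    by (simp add: add_mono)
  also have "\<dots> = ennreal (pi * rc\<^sup>2 + (pi * (tt\<^sup>2 + 2 * tt) + pi * (2 + 2 * tt\<^sup>2 + 4 * tt)))"
  proof -
    have "ennreal (H 0) * ennreal (pi * (exp se)\<^sup>2) = ennreal (H 0 * (pi * (exp se)\<^sup>2))"
      by (simp add: ennreal_mult'')
    also have "\<dots> = ennreal (pi * rc\<^sup>2)" by (simp only: final_arith(1))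
    finally have a: "ennreal (H 0) * ennreal (pi * (exp se)\<^sup>2) = ennreal (pi * rc\<^sup>2)" .
    have n1: "0 \<le> pi * (tt\<^sup>2 + 2 * tt)" "0 \<le> pi * (2 + 2 * tt\<^sup>2 + 4 * tt)" using tt_pos by auto
    show ?thesis unfolding a final_arith(2,3) using n1
      by (simp add: ennreal_plus[symmetric] add_nonneg_nonneg del: ennreal_plus)
  qed
  also have "\<dots> < ennreal (10 * pi)"
  proof (subst ennreal_less_iff)
    show "0 \<le> pi * rc\<^sup>2 + (pi * (tt\<^sup>2 + 2 * tt) + pi * (2 + 2 * tt\<^sup>2 + 4 * tt))"
      using tt_pos by simp
    have "pi * rc\<^sup>2 + (pi * (tt\<^sup>2 + 2 * tt) + pi * (2 + 2 * tt\<^sup>2 + 4 * tt)) = pi * (rc\<^sup>2 + 3 * tt\<^sup>2 + 2 + 6 * tt)"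
      by (simp add: algebra_simps)
    also have "\<dots> = pi * (4 + 6 * tt)" using tt_sq by simp
    also have "\<dots> < pi * 10" using tt_lt1 by simp
    finally show "pi * rc\<^sup>2 + (pi * (tt\<^sup>2 + 2 * tt) + pi * (2 + 2 * tt\<^sup>2 + 4 * tt)) < 10 * pi" by simp
  qed
  finally show ?thesis .
qed

end

theorem lemma3p2:
  fixes lc rc s0 se s2 sb :: real
  assumes "lc > 0" and "0 < rc" and "rc < 1 / 10"
    and "cb_params lc rc s0 se s2 sb"
  shows "((AE z in (lborel :: complex measure).
            deriv (u_cb lc rc s0 se s2 sb) differentiable (at (cb_s se z)) \<and>
            K_cb lc rc s0 se s2 sb z \<in> {-1 .. 1 / 2})) \<and>
         s0 = - (lc + arctan (inverse rc)) / rc \<and>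
         se = s0 + ln (1 + rc\<^sup>2) / 2 \<and>
         ball 0 (sqrt (1 + rc\<^sup>2)) = U_i lc rc s0 se \<union> closure (U_c lc rc se) \<union> U_b se \<and>
         sb \<le> 7 / 4 / rc \<and>
         vol_cb lc rc s0 se s2 sb (U_b se) < ennreal (10 * pi)"
proof -
  interpret cb lc rc s0 se s2 sb using assms by unfold_locales
  show ?thesis using AE_K s0_eq se_eq ball_eq sb_bound vol_bound by blast
qed

end
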